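(* Let $F:\mathcal{X}\to\mathcal{X}$ be such that the Koopman operator $\mathcal{K}$ on $\mathcal{H}$ is densely defined, and let $\mathfrak{K}_1,\mathfrak{K}_2,\dots$ be a countable family of kernel functions (i.e. $\mathfrak{K}_j=\mathfrak{K}_{x_j}$ for some $x_j\in\mathcal{X}$) whose linear span is a core of $\mathcal{K}^*$. Let $V_N=\mathrm{span}\{\mathfrak{K}_1,\dots,\mathfrak{K}_N\}$, let $\mathcal{P}_N:\mathcal{H}\to V_N$ be the orthogonal projection and $\mathcal{P}_N^*:V_N\to\mathcal{H}$ the inclusion, so that $$\sigma_{\inf}((\mathcal{K}^*-zI)\mathcal{P}_N^* )=\inf_{0\neq g\in V_N}\frac{\|(\mathcal{K}^*-zI)g\|}{\|g\|}.$$ Then for each $z\in\mathbb{C}$ the quantity $\sigma_{\inf}((\mathcal{K}^*-zI)\mathcal{P}_N^* )$ is non-increasing in $N$, and as $N\to\infty$ the functions $z\mapsto\sigma_{\inf}((\mathcal{K}^*-zI)\mathcal{P}_N^* )$ converge to $z\mapsto\sigma_{\inf}(\mathcal{K}^*-zI)$ uniformly on compact subsets of $\mathbb{C}$.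
   Context: $\mathcal{H}$ is a reproducing kernel Hilbert space (RKHS) of complex-valued functions on a set $\mathcal{X}$ with reproducing kernel $\mathfrak{K}:\mathcal{X}\times\mathcal{X}\to\mathbb{C}$, inner product $\langle\cdot,\cdot\rangle$ (linear in the first argument) and norm $\|\cdot\|$; $\mathfrak{K}_x\in\mathcal{H}$ denotes the kernel function at $x$, so $g(x)=\langle g,\mathfrak{K}_x\rangle$ for all $g\in\mathcal{H}$ and $\mathfrak{K}(x,y)=\langle\mathfrak{K}_x,\mathfrak{K}_y\rangle$. For $F:\mathcal{X}\to\mathcal{X}$ the Koopman operator $\mathcal{K}=\mathcal{K}_F$ on $\mathcal{H}$ is $\mathcal{K}g=g\circ F$ with domain $\{g\in\mathcal{H}:g\circ F\in\mathcal{H}\}$; it is closed. When it is densely defined, its adjoint $\mathcal{K}^*$ (Perron–Frobenius operator) is closed and densely defined, and $\mathfrak{K}_x\in\mathcal{D}(\mathcal{K}^* )$ with $\mathcal{K}^*\mathfrak{K}_x=\mathfrak{K}_{F(x)}$. For an operator $T$ with domain $\mathcal{D}(T)$, the injection modulus is $\sigma_{\inf}(T)=\inf\{\|Tg\|/\|g\|:0\neq g\in\mathcal{D}(T)\}$. A core of a closed operator $T$ is a subspace of $\mathcal{D}(T)$ on which the restriction of $T$ has closure $T$. *)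

theory Defs
  imports "HOL-Analysis.Analysis"
begin

definition hnorm :: "(('x \<Rightarrow> complex) \<Rightarrow> ('x \<Rightarrow> complex) \<Rightarrow> complex) \<Rightarrow> ('x \<Rightarrow> complex) \<Rightarrow> real" where
  "hnorm ip g = sqrt (Re (ip g g))"

definition is_rkhs :: "('x \<Rightarrow> complex) set \<Rightarrow> (('x \<Rightarrow> complex) \<Rightarrow> ('x \<Rightarrow> complex) \<Rightarrow> complex)
    \<Rightarrow> ('x \<Rightarrow> 'x \<Rightarrow> complex) \<Rightarrow> bool" where
  "is_rkhs H ip K \<longleftrightarrow>
     \<comment> \<open>complex vector space of functions\<close>
     (\<lambda>_. 0) \<in> H \<and>
     (\<forall>f\<in>H. \<forall>g\<in>H. (\<lambda>y. f y + g y) \<in> H) \<and>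
     (\<forall>c. \<forall>f\<in>H. (\<lambda>y. c * f y) \<in> H) \<and>
     \<comment> \<open>inner product: linear in the first argument, conjugate symmetric, positive definite\<close>
     (\<forall>f\<in>H. \<forall>g\<in>H. \<forall>h\<in>H. \<forall>c. ip (\<lambda>y. c * f y + g y) h = c * ip f h + ip g h) \<and>
     (\<forall>f\<in>H. \<forall>g\<in>H. ip g f = cnj (ip f g)) \<and>
     (\<forall>f\<in>H. 0 \<le> Re (ip f f)) \<and>
     (\<forall>f\<in>H. ip f f = 0 \<longrightarrow> f = (\<lambda>_. 0)) \<and>
     \<comment> \<open>completeness\<close>
     (\<forall>s. (\<forall>n. s n \<in> H) \<and>
          (\<forall>e>0. \<exists>M. \<forall>m\<ge>M. \<forall>n\<ge>M. hnorm ip (\<lambda>y. s m y - s n y) < e)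
        \<longrightarrow> (\<exists>l\<in>H. (\<lambda>n. hnorm ip (\<lambda>y. s n y - l y)) \<longlonglongrightarrow> 0)) \<and>
     \<comment> \<open>reproducing kernel: the kernel function at x is K x, i.e. K(x,y) = K_x(y) = <K_x, K_y>\<close>
     (\<forall>x. K x \<in> H) \<and>
     (\<forall>g\<in>H. \<forall>x. g x = ip g (K x)) \<and>
     (\<forall>x y. K x y = ip (K x) (K y))"

definition dense_in_H :: "('x \<Rightarrow> complex) set \<Rightarrow> (('x \<Rightarrow> complex) \<Rightarrow> ('x \<Rightarrow> complex) \<Rightarrow> complex)
    \<Rightarrow> ('x \<Rightarrow> complex) set \<Rightarrow> bool" where
  "dense_in_H H ip D \<longleftrightarrow> D \<subseteq> H \<and> (\<forall>g\<in>H. \<forall>e>0. \<exists>d\<in>D. hnorm ip (\<lambda>y. g y - d y) < e)"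

definition koopman_dom :: "('x \<Rightarrow> complex) set \<Rightarrow> ('x \<Rightarrow> 'x) \<Rightarrow> ('x \<Rightarrow> complex) set" where
  "koopman_dom H F = {g \<in> H. g \<circ> F \<in> H}"

text \<open>Adjoint of the Koopman operator (Perron--Frobenius operator): domain and action.\<close>
definition pf_dom :: "('x \<Rightarrow> complex) set \<Rightarrow> (('x \<Rightarrow> complex) \<Rightarrow> ('x \<Rightarrow> complex) \<Rightarrow> complex)
    \<Rightarrow> ('x \<Rightarrow> 'x) \<Rightarrow> ('x \<Rightarrow> complex) set" where
  "pf_dom H ip F = {h \<in> H. \<exists>w\<in>H. \<forall>g\<in>koopman_dom H F. ip (g \<circ> F) h = ip g w}"

definition pf :: "('x \<Rightarrow> complex) set \<Rightarrow> (('x \<Rightarrow> complex) \<Rightarrow> ('x \<Rightarrow> complex) \<Rightarrow> complex)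
    \<Rightarrow> ('x \<Rightarrow> 'x) \<Rightarrow> ('x \<Rightarrow> complex) \<Rightarrow> ('x \<Rightarrow> complex)" where
  "pf H ip F h = (THE w. w \<in> H \<and> (\<forall>g\<in>koopman_dom H F. ip (g \<circ> F) h = ip g w))"

definition cspan :: "('x \<Rightarrow> complex) set \<Rightarrow> ('x \<Rightarrow> complex) set" where
  "cspan S = {g. \<exists>A c. finite A \<and> A \<subseteq> S \<and> g = (\<lambda>y. \<Sum>s\<in>A. c s * s y)}"

definition is_core :: "('x \<Rightarrow> complex) set \<Rightarrow> (('x \<Rightarrow> complex) \<Rightarrow> ('x \<Rightarrow> complex) \<Rightarrow> complex)
    \<Rightarrow> (('x \<Rightarrow> complex) \<Rightarrow> ('x \<Rightarrow> complex)) \<Rightarrow> ('x \<Rightarrow> complex) set \<Rightarrow> ('x \<Rightarrow> complex) set \<Rightarrow> bool" where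
  "is_core H ip T D S \<longleftrightarrow> S \<subseteq> D \<and>
     {(h, w). h \<in> H \<and> w \<in> H \<and>
        (\<forall>e>0. \<exists>g\<in>S. hnorm ip (\<lambda>y. h y - g y) < e \<and> hnorm ip (\<lambda>y. w y - T g y) < e)}
     = {(h, T h) | h. h \<in> D}"

text \<open>Injection modulus (extended-real valued; the infimum over the empty set is \<infinity>).\<close>
definition sigma_inf :: "(('x \<Rightarrow> complex) \<Rightarrow> ('x \<Rightarrow> complex) \<Rightarrow> complex)
    \<Rightarrow> (('x \<Rightarrow> complex) \<Rightarrow> ('x \<Rightarrow> complex)) \<Rightarrow> ('x \<Rightarrow> complex) set \<Rightarrow> ereal" where
  "sigma_inf ip T D = Inf {ereal (hnorm ip (T g) / hnorm ip g) | g. g \<in> D \<and> g \<noteq> (\<lambda>_. 0)}"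

end

theory Submission
  imports Defs
begin


context
  fixes H :: "('x \<Rightarrow> complex) set" and ip and K :: "'x \<Rightarrow> 'x \<Rightarrow> complex"
  assumes rk: "is_rkhs H ip K"
begin

lemma zeroH: "(\<lambda>_. 0) \<in> H" using rk unfolding is_rkhs_def by blast
lemma addH: "f\<in>H \<Longrightarrow> g\<in>H \<Longrightarrow> (\<lambda>y. f y + g y) \<in> H" using rk unfolding is_rkhs_def by blast
lemma scaleH: "f\<in>H \<Longrightarrow> (\<lambda>y. c * f y) \<in> H" using rk unfolding is_rkhs_def by blast
lemma diffH: "f\<in>H \<Longrightarrow> g\<in>H \<Longrightarrow> (\<lambda>y. f y - g y) \<in> H"
proof -
  assume "f\<in>H" "g\<in>H"
  then have "(\<lambda>y. f y + (-1) * g y) \<in> H" using addH scaleH by blast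
  then show ?thesis by simp
qed
lemma lin: "f\<in>H \<Longrightarrow> g\<in>H \<Longrightarrow> h\<in>H \<Longrightarrow> ip (\<lambda>y. c * f y + g y) h = c * ip f h + ip g h"
  using rk unfolding is_rkhs_def by blast
lemma sym: "f\<in>H \<Longrightarrow> g\<in>H \<Longrightarrow> ip g f = cnj (ip f g)" using rk unfolding is_rkhs_def by blast
lemma pos: "f\<in>H \<Longrightarrow> 0 \<le> Re (ip f f)" using rk unfolding is_rkhs_def by blast
lemma definite: "f\<in>H \<Longrightarrow> ip f f = 0 \<Longrightarrow> f = (\<lambda>_. 0)" using rk unfolding is_rkhs_def by blast

lemma ip_zero: "h\<in>H \<Longrightarrow> ip (\<lambda>_. 0) h = 0"
  using lin[of "\<lambda>_. 0" "\<lambda>_. 0" h 1] zeroH by simp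

lemma ip_scale1: "f\<in>H \<Longrightarrow> h\<in>H \<Longrightarrow> ip (\<lambda>y. c * f y) h = c * ip f h"
  using lin[of f "\<lambda>_. 0" h c] zeroH ip_zero by simp
lemma ip_add1: "f\<in>H \<Longrightarrow> g\<in>H \<Longrightarrow> h\<in>H \<Longrightarrow> ip (\<lambda>y. f y + g y) h = ip f h + ip g h"
  using lin[of f g h 1] by simp
lemma ip_add2: "f\<in>H \<Longrightarrow> g\<in>H \<Longrightarrow> h\<in>H \<Longrightarrow> ip h (\<lambda>y. f y + g y) = ip h f + ip h g"
proof -
  assume a: "f\<in>H" "g\<in>H" "h\<in>H"
  have "ip h (\<lambda>y. f y + g y) = cnj (ip (\<lambda>y. f y + g y) h)" using sym a addH by blast
  also have "\<dots> = cnj (ip f h) + cnj (ip g h)" using ip_add1 a by simp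
  also have "\<dots> = ip h f + ip h g" by (simp add: sym[OF a(1) a(3)] sym[OF a(2) a(3)])
  finally show ?thesis .
qed
lemma ip_scale2: "f\<in>H \<Longrightarrow> h\<in>H \<Longrightarrow> ip h (\<lambda>y. c * f y) = cnj c * ip h f"
proof -
  assume a: "f\<in>H" "h\<in>H"
  have "ip h (\<lambda>y. c * f y) = cnj (ip (\<lambda>y. c * f y) h)" using sym a scaleH by blast
  also have "\<dots> = cnj c * cnj (ip f h)" using ip_scale1 a by simp
  also have "\<dots> = cnj c * ip h f" by (simp add: sym[OF a(1) a(2)])
  finally show ?thesis .
qed
lemma ip_real: "f\<in>H \<Longrightarrow> ip f f = complex_of_real (Re (ip f f))"
proof -
  assume a: "f\<in>H"
  have "ip f f = cnj (ip f f)" using sym a by blast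
  then have "Im (ip f f) = 0" by (metis Reals_cnj_iff complex_is_Real_iff)
  then show ?thesis by (simp add: complex_eq_iff)
qed

lemma hnorm_nonneg: assumes "f\<in>H" shows "0 \<le> hnorm ip f" using pos[OF assms] by (simp add: hnorm_def)
lemma hnorm_sq: assumes "f\<in>H" shows "(hnorm ip f)^2 = Re (ip f f)" using pos[OF assms] by (simp add: hnorm_def)
lemma hnorm_zero: "hnorm ip (\<lambda>_. 0) = 0" using ip_zero zeroH by (simp add: hnorm_def)
lemma hnorm_pos: "f\<in>H \<Longrightarrow> f \<noteq> (\<lambda>_. 0) \<Longrightarrow> 0 < hnorm ip f"
proof -
  assume a: "f\<in>H" "f \<noteq> (\<lambda>_. 0)"
  show ?thesis
  proof (rule ccontr)
    assume "\<not> 0 < hnorm ip f"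
    then have "hnorm ip f = 0" using hnorm_nonneg[OF a(1)] by linarith
    then have "Re (ip f f) = 0" using hnorm_sq[OF a(1)] by simp
    then have "ip f f = 0" using ip_real[OF a(1)] by simp
    then show False using definite a by blast
  qed
qed
lemma hnorm_scale: "f\<in>H \<Longrightarrow> hnorm ip (\<lambda>y. c * f y) = cmod c * hnorm ip f"
proof -
  assume a: "f\<in>H"
  have "ip (\<lambda>y. c * f y) (\<lambda>y. c * f y) = c * (cnj c * ip f f)"
    using ip_scale1 ip_scale2 a scaleH by simp
  also have "\<dots> = complex_of_real ((cmod c)^2 * Re (ip f f))"
    using ip_real[OF a] complex_norm_square[of c]
    by (metis mult.assoc of_real_mult)
  finally have "Re (ip (\<lambda>y. c * f y) (\<lambda>y. c * f y)) = (cmod c)^2 * Re (ip f f)" by simp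
  then show ?thesis by (simp add: hnorm_def real_sqrt_mult)
qed

lemma expand: "f\<in>H \<Longrightarrow> g\<in>H \<Longrightarrow>
  Re (ip (\<lambda>y. f y + complex_of_real t * g y) (\<lambda>y. f y + complex_of_real t * g y))
   = Re (ip f f) + 2*t*Re (ip f g) + t^2 * Re (ip g g)"
proof -
  assume a: "f\<in>H" "g\<in>H"
  define u where "u = (\<lambda>y. complex_of_real t * g y)"
  have uH: "u \<in> H" using a scaleH u_def by blast
  have "ip (\<lambda>y. f y + u y) (\<lambda>y. f y + u y) = ip f (\<lambda>y. f y + u y) + ip u (\<lambda>y. f y + u y)"
    using ip_add1 a uH addH by blast
  also have "\<dots> = ip f f + ip f u + (ip u f + ip u u)"
    using ip_add2 a uH by simp
  also have "\<dots> = ip f f + t * ip f g + (t * ip g f + t * (t * ip g g))"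
    unfolding u_def using ip_scale1 ip_scale2 a scaleH by simp
  finally have e: "ip (\<lambda>y. f y + u y) (\<lambda>y. f y + u y) = ip f f + t * ip f g + (t * ip g f + t * (t * ip g g))" .
  have "Re (ip g f) = Re (ip f g)" by (simp add: sym[OF a])
  then show ?thesis using e unfolding u_def by (simp add: power2_eq_square)
qed

lemma quad: fixes a b c :: real
  assumes h: "\<forall>t. 0 \<le> c + 2*t*b + t^2*a" and a: "0 \<le> a" shows "b^2 \<le> a*c"
proof (cases "a = 0")
  case True
  have "b = 0"
  proof (rule ccontr)
    assume b: "b \<noteq> 0"
    have "0 \<le> c + 2*(-(c+1)/(2*b))*b + (-(c+1)/(2*b))^2*a" using h by blast
    then show False using b True by (simp add: field_simps)
  qed
  then show ?thesis using True by simp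
next
  case False
  then have ap: "a > 0" using a by simp
  have "0 \<le> c + 2*(-b/a)*b + (-b/a)^2*a" using h by blast
  then have "0 \<le> c - b^2/a" using ap by (simp add: field_simps power2_eq_square)
  then show ?thesis using ap by (simp add: field_simps)
qed

lemma cs: "f\<in>H \<Longrightarrow> g\<in>H \<Longrightarrow> (Re (ip f g))^2 \<le> Re (ip g g) * Re (ip f f)"
proof -
  assume a: "f\<in>H" "g\<in>H"
  have "\<forall>t. 0 \<le> Re (ip f f) + 2*t*Re (ip f g) + t^2 * Re (ip g g)"
  proof
    fix t
    have "(\<lambda>y. f y + complex_of_real t * g y) \<in> H" using a scaleH addH by blast
    then show "0 \<le> Re (ip f f) + 2*t*Re (ip f g) + t^2 * Re (ip g g)"
      using pos expand[OF a, of t] by metis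
  qed
  then show ?thesis using quad pos a(2) by blast
qed

lemma triangle: "f\<in>H \<Longrightarrow> g\<in>H \<Longrightarrow> hnorm ip (\<lambda>y. f y + g y) \<le> hnorm ip f + hnorm ip g"
proof -
  assume a: "f\<in>H" "g\<in>H"
  have e: "Re (ip (\<lambda>y. f y + g y) (\<lambda>y. f y + g y)) = Re (ip f f) + 2*Re (ip f g) + Re (ip g g)"
    using expand[OF a, of 1] by simp
  have b: "\<bar>Re (ip f g)\<bar> \<le> sqrt (Re (ip g g)) * sqrt (Re (ip f f))"
  proof -
    have "sqrt ((Re (ip f g))^2) \<le> sqrt (Re (ip g g) * Re (ip f f))"
      using cs[OF a] real_sqrt_le_mono by blast
    then show ?thesis by (simp add: real_sqrt_mult)
  qed
  have s1: "(sqrt (Re (ip f f)))^2 = Re (ip f f)" "(sqrt (Re (ip g g)))^2 = Re (ip g g)" using pos a by auto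
  have "Re (ip (\<lambda>y. f y + g y) (\<lambda>y. f y + g y)) \<le> (sqrt (Re (ip f f)) + sqrt (Re (ip g g)))^2"
    unfolding e power2_sum s1 using b by (simp add: mult.commute)
  then show ?thesis unfolding hnorm_def using pos a by (intro real_le_lsqrt) auto
qed

end


lemma sig_lower: "g \<in> X \<Longrightarrow> g \<noteq> (\<lambda>_. 0) \<Longrightarrow> sigma_inf ip Op X \<le> ereal (hnorm ip (Op g) / hnorm ip g)"
  unfolding sigma_inf_def by (rule Inf_lower) blast

lemma sig_greatest: "(\<And>g. g \<in> X \<Longrightarrow> g \<noteq> (\<lambda>_. 0) \<Longrightarrow> b \<le> ereal (hnorm ip (Op g) / hnorm ip g)) \<Longrightarrow> b \<le> sigma_inf ip Op X"
  unfolding sigma_inf_def by (rule Inf_greatest) blast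

lemma sig_mono: "X \<subseteq> Y \<Longrightarrow> sigma_inf ip Op Y \<le> sigma_inf ip Op X"
  unfolding sigma_inf_def by (rule Inf_superset_mono) blast

lemma sig_less: "sigma_inf ip Op X < b \<Longrightarrow> \<exists>g\<in>X. g \<noteq> (\<lambda>_. 0) \<and> ereal (hnorm ip (Op g) / hnorm ip g) < b"
  unfolding sigma_inf_def by (auto simp: Inf_less_iff)

lemma sig_empty: assumes "\<not> (\<exists>g\<in>X. g \<noteq> (\<lambda>_. 0))" shows "sigma_inf ip Op X = \<infinity>"
proof -
  have "{ereal (hnorm ip (Op g) / hnorm ip g) |g. g \<in> X \<and> g \<noteq> (\<lambda>_. 0)} = {}" (is "?E = {}") using assms by blast
  show ?thesis unfolding sigma_inf_def \<open>?E = {}\<close> by (simp add: top_ereal_def)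
qed

lemma cspan_mono: "A \<subseteq> B \<Longrightarrow> cspan A \<subseteq> cspan B"
  unfolding cspan_def by blast

lemma cspan_fin: assumes "s \<in> cspan {K (xs j) | j. j \<ge> (1::nat)}"
  shows "\<exists>N. s \<in> cspan {K (xs j) | j. 1 \<le> j \<and> j \<le> N}"
proof -
  obtain A c where A: "finite A" "A \<subseteq> {K (xs j) | j. j \<ge> (1::nat)}" "s = (\<lambda>y. \<Sum>a\<in>A. c a * a y)"
    using assms unfolding cspan_def by blast
  have "\<forall>a\<in>A. \<exists>j. j \<ge> 1 \<and> a = K (xs j)" using A(2) by blast
  then obtain jf where jf: "\<And>a. a \<in> A \<Longrightarrow> jf a \<ge> 1 \<and> a = K (xs (jf a))" by metis
  define N where "N = (\<Sum>a\<in>A. jf a)"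
  have "jf a \<le> N" if "a\<in>A" for a unfolding N_def using A(1) that by (intro member_le_sum) auto
  then have "A \<subseteq> {K (xs j) | j. 1 \<le> j \<and> j \<le> N}" using jf by blast
  then show ?thesis using A unfolding cspan_def by blast
qed

lemma core_approx: assumes c: "is_core H ip T D S" and g: "g \<in> D"
  shows "T g \<in> H \<and> (\<forall>e>0. \<exists>s\<in>S. hnorm ip (\<lambda>y. g y - s y) < e \<and> hnorm ip (\<lambda>y. T g y - T s y) < e)"
proof -
  have "(g, T g) \<in> {(h, T h) | h. h \<in> D}" using g by blast
  then have "(g, T g) \<in> {(h, w). h \<in> H \<and> w \<in> H \<and>
        (\<forall>e>0. \<exists>g\<in>S. hnorm ip (\<lambda>y. h y - g y) < e \<and> hnorm ip (\<lambda>y. w y - T g y) < e)}"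
    using c unfolding is_core_def by argo
  then show ?thesis by simp
qed

lemma ereal_minus_le_self: "e > 0 \<Longrightarrow> (x::ereal) - ereal e \<le> x"
  by (cases x) auto

theorem mainTheorem2:
  fixes H :: "('x \<Rightarrow> complex) set"
    and ip :: "('x \<Rightarrow> complex) \<Rightarrow> ('x \<Rightarrow> complex) \<Rightarrow> complex"
    and K :: "'x \<Rightarrow> 'x \<Rightarrow> complex"
    and F :: "'x \<Rightarrow> 'x"
    and xs :: "nat \<Rightarrow> 'x"
  assumes rkhs: "is_rkhs H ip K"
    and dense: "dense_in_H H ip (koopman_dom H F)"
    and core: "is_core H ip (pf H ip F) (pf_dom H ip F) (cspan {K (xs j) | j. j \<ge> 1})"
  shows "(\<forall>z N M. N \<le> M \<longrightarrow>
            sigma_inf ip (\<lambda>g y. pf H ip F g y - z * g y) (cspan {K (xs j) | j. 1 \<le> j \<and> j \<le> M})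
          \<le> sigma_inf ip (\<lambda>g y. pf H ip F g y - z * g y) (cspan {K (xs j) | j. 1 \<le> j \<and> j \<le> N}))
       \<and> (\<forall>C. compact C \<longrightarrow> (\<forall>e::real. e > 0 \<longrightarrow>
            (\<forall>\<^sub>F N in sequentially. \<forall>z\<in>C.
               sigma_inf ip (\<lambda>g y. pf H ip F g y - z * g y) (pf_dom H ip F) - ereal e
                 \<le> sigma_inf ip (\<lambda>g y. pf H ip F g y - z * g y) (cspan {K (xs j) | j. 1 \<le> j \<and> j \<le> N})
             \<and> sigma_inf ip (\<lambda>g y. pf H ip F g y - z * g y) (cspan {K (xs j) | j. 1 \<le> j \<and> j \<le> N})
                 \<le> sigma_inf ip (\<lambda>g y. pf H ip F g y - z * g y) (pf_dom H ip F) + ereal e)))"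
proof -
  let ?T = "pf H ip F"
  let ?D = "pf_dom H ip F"
  let ?S = "cspan {K (xs j) | j. j \<ge> 1}"
  let ?V = "\<lambda>N. cspan {K (xs j) | j. 1 \<le> j \<and> j \<le> N}"
  let ?sig = "\<lambda>z X. sigma_inf ip (\<lambda>g y. pf H ip F g y - z * g y) X"
  let ?rat = "\<lambda>z g. hnorm ip (\<lambda>y. pf H ip F g y - z * g y) / hnorm ip g"
  have DH: "?D \<subseteq> H" unfolding pf_dom_def by blast
  have SD: "?S \<subseteq> ?D" using core unfolding is_core_def by blast
  have VS: "\<And>N. ?V N \<subseteq> ?S" by (rule cspan_mono) blast
  have VD: "\<And>N. ?V N \<subseteq> ?D" using VS SD by blast
  have Vmono: "\<And>N M. N \<le> M \<Longrightarrow> ?V N \<subseteq> ?V M" by (rule cspan_mono) auto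
  have TH: "\<And>g. g\<in>?D \<Longrightarrow> ?T g \<in> H" using core_approx[OF core] by blast
  have capp: "\<And>g e. g\<in>?D \<Longrightarrow> e>0 \<Longrightarrow> \<exists>s\<in>?S. hnorm ip (\<lambda>y. g y - s y) < e \<and> hnorm ip (\<lambda>y. ?T g y - ?T s y) < e"
    using core_approx[OF core] by blast
  have OpH: "\<And>z g. g\<in>?D \<Longrightarrow> (\<lambda>y. ?T g y - z * g y) \<in> H"
    using diffH[OF rkhs] scaleH[OF rkhs] TH DH by blast
  have part1: "\<forall>z N M. N \<le> M \<longrightarrow> ?sig z (?V M) \<le> ?sig z (?V N)"
    by (intro allI impI sig_mono Vmono)
  have lowerb: "\<And>z N e. e>0 \<Longrightarrow> ?sig z ?D - ereal e \<le> ?sig z (?V N)"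
    by (rule order_trans[OF ereal_minus_le_self sig_mono[OF VD]])
  have upper: "eventually (\<lambda>N. \<forall>z\<in>C. ?sig z (?V N) \<le> ?sig z ?D + ereal e) sequentially"
    if C: "compact C" and e: "e > 0" for C e
  proof (cases "\<exists>g\<in>?D. g \<noteq> (\<lambda>_. 0)")
    case False
    then have "\<And>z. ?sig z ?D = \<infinity>" by (rule sig_empty)
    then show ?thesis by simp
  next
    case True
    then obtain g0 where g0: "g0 \<in> ?D" "g0 \<noteq> (\<lambda>_. 0)" by blast
    have rat_nn: "\<And>z g. g\<in>?D \<Longrightarrow> 0 \<le> ?rat z g"
    proof -
      fix z g assume g: "g\<in>?D"
      then have "g \<in> H" using DH by blast
      then show "0 \<le> ?rat z g" using g by (intro divide_nonneg_nonneg hnorm_nonneg[OF rkhs] OpH)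
    qed
    define r where "r z = real_of_ereal (?sig z ?D)" for z
    have fin: "?sig z ?D = ereal (r z)" for z
    proof -
      have "0 \<le> ?sig z ?D" by (rule sig_greatest) (use rat_nn in auto)
      moreover have "?sig z ?D \<le> ereal (?rat z g0)" by (rule sig_lower) (use g0 in auto)
      ultimately have "\<bar>?sig z ?D\<bar> \<noteq> \<infinity>" by auto
      then show ?thesis unfolding r_def by (simp add: ereal_real)
    qed
    have rlow: "r z \<le> ?rat z g" if "g\<in>?D" "g \<noteq> (\<lambda>_. 0)" for z g
    proof -
      have "?sig z ?D \<le> ereal (?rat z g)" by (rule sig_lower) (use that in auto)
      then show ?thesis using fin by simp
    qed
    have rapp: "\<exists>g\<in>?D. g \<noteq> (\<lambda>_. 0) \<and> ?rat z g < r z + \<epsilon>" if "\<epsilon> > 0" for z \<epsilon>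
    proof -
      have "?sig z ?D < ereal (r z + \<epsilon>)" using fin that by simp
      from sig_less[OF this] show ?thesis by simp
    qed
    have lip: "?rat z g \<le> ?rat z' g + cmod (z - z')" if g: "g\<in>?D" "g \<noteq> (\<lambda>_. 0)" for z z' g
    proof -
      have gH: "g \<in> H" using g DH by blast
      have G: "0 < hnorm ip g" using hnorm_pos[OF rkhs gH g(2)] .
      have eq: "(\<lambda>y. ?T g y - z * g y) = (\<lambda>y. (?T g y - z' * g y) + (z' - z) * g y)"
        by (rule ext) (simp add: algebra_simps)
      have "hnorm ip (\<lambda>y. ?T g y - z * g y) \<le> hnorm ip (\<lambda>y. ?T g y - z' * g y) + hnorm ip (\<lambda>y. (z' - z) * g y)"
        unfolding eq by (rule triangle[OF rkhs OpH[OF g(1)] scaleH[OF rkhs gH]])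
      also have "\<dots> = hnorm ip (\<lambda>y. ?T g y - z' * g y) + cmod (z - z') * hnorm ip g"
        using hnorm_scale[OF rkhs gH] by (simp add: norm_minus_commute)
      finally show ?thesis using G by (simp add: field_simps)
    qed
    have rlip: "r z \<le> r z' + cmod (z - z')" for z z'
    proof (rule ccontr)
      assume "\<not> ?thesis"
      then obtain g where g: "g\<in>?D" "g \<noteq> (\<lambda>_. 0)" "?rat z' g < r z' + (r z - r z' - cmod (z - z'))"
        using rapp[of "r z - r z' - cmod (z - z')" z'] by auto
      have "r z \<le> ?rat z g" using rlow g by blast
      also have "\<dots> \<le> ?rat z' g + cmod (z - z')" using lip g by blast
      finally show False using g(3) by linarith
    qed
    have approxS: "\<exists>s\<in>?S. s \<noteq> (\<lambda>_. 0) \<and> ?rat z s \<le> ?rat z g + \<epsilon>"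
      if g: "g\<in>?D" "g \<noteq> (\<lambda>_. 0)" and ep: "\<epsilon> > 0" for z g \<epsilon>
    proof -
      have gH: "g \<in> H" using g DH by blast
      define G where "G = hnorm ip g"
      define A where "A = hnorm ip (\<lambda>y. ?T g y - z * g y)"
      define k where "k = 1 + cmod z"
      have G: "0 < G" unfolding G_def using hnorm_pos[OF rkhs gH g(2)] .
      have A: "0 \<le> A" unfolding A_def using hnorm_nonneg[OF rkhs OpH[OF g(1)]] .
      have k: "1 \<le> k" unfolding k_def by simp
      define \<delta> where "\<delta> = min (G/2) (\<epsilon>*G^2/(G*k + A + \<epsilon>*G))"
      have den: "0 < G*k + A + \<epsilon>*G" using G A k ep by (simp add: add_pos_nonneg)
      have d0: "0 < \<delta>" unfolding \<delta>_def using G ep den by simp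
      have d1: "\<delta> \<le> G/2" unfolding \<delta>_def by (rule min.cobounded1)
      have d2: "\<delta> * (G*k + A + \<epsilon>*G) \<le> \<epsilon>*G^2"
      proof -
        have "\<delta> \<le> \<epsilon>*G^2/(G*k + A + \<epsilon>*G)" unfolding \<delta>_def by simp
        then show ?thesis using den by (simp add: le_divide_eq)
      qed
      obtain s where s: "s \<in> ?S" "hnorm ip (\<lambda>y. g y - s y) < \<delta>" "hnorm ip (\<lambda>y. ?T g y - ?T s y) < \<delta>"
        using capp[OF g(1) d0] by blast
      have sD: "s \<in> ?D" using s SD by blast
      have sH: "s \<in> H" using sD DH by blast
      have TgH: "?T g \<in> H" "?T s \<in> H" using TH g(1) sD by auto
      have gs: "g = (\<lambda>y. s y + (g y - s y))" by simp
      have "G \<le> hnorm ip s + hnorm ip (\<lambda>y. g y - s y)"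
        unfolding G_def by (subst gs) (rule triangle[OF rkhs sH diffH[OF rkhs gH sH]])
      then have hs: "G - \<delta> < hnorm ip s" using s(2) by linarith
      have sne: "s \<noteq> (\<lambda>_. 0)"
      proof
        assume "s = (\<lambda>_. 0)"
        then have "hnorm ip s = 0" using hnorm_zero[OF rkhs] by simp
        then show False using hs d1 G by linarith
      qed
      have eq: "(\<lambda>y. ?T s y - z * s y) = (\<lambda>y. ((?T g y - z * g y) + (-1) * (?T g y - ?T s y)) + z * (g y - s y))"
        by (rule ext) (simp add: algebra_simps)
      have H1: "(\<lambda>y. ?T g y - ?T s y) \<in> H" using diffH[OF rkhs TgH] .
      have H2: "(\<lambda>y. g y - s y) \<in> H" using diffH[OF rkhs gH sH] .
      have t1: "hnorm ip (\<lambda>y. ?T s y - z * s y)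
            \<le> hnorm ip (\<lambda>y. (?T g y - z * g y) + (-1) * (?T g y - ?T s y)) + hnorm ip (\<lambda>y. z * (g y - s y))"
        unfolding eq by (rule triangle[OF rkhs addH[OF rkhs OpH[OF g(1)] scaleH[OF rkhs H1]] scaleH[OF rkhs H2]])
      have t2: "hnorm ip (\<lambda>y. (?T g y - z * g y) + (-1) * (?T g y - ?T s y)) \<le> A + hnorm ip (\<lambda>y. (-1) * (?T g y - ?T s y))"
        unfolding A_def by (rule triangle[OF rkhs OpH[OF g(1)] scaleH[OF rkhs H1]])
      have n1: "hnorm ip (\<lambda>y. (-1) * (?T g y - ?T s y)) = hnorm ip (\<lambda>y. ?T g y - ?T s y)"
        by (subst hnorm_scale[OF rkhs H1]) simp
      have n2: "hnorm ip (\<lambda>y. z * (g y - s y)) = cmod z * hnorm ip (\<lambda>y. g y - s y)"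
        by (rule hnorm_scale[OF rkhs H2])
      have n3: "cmod z * hnorm ip (\<lambda>y. g y - s y) \<le> cmod z * \<delta>"
        using s(2) by (simp add: mult_left_mono)
      have kd: "k * \<delta> = \<delta> + cmod z * \<delta>" unfolding k_def by (simp add: algebra_simps)
      have num: "hnorm ip (\<lambda>y. ?T s y - z * s y) \<le> A + k * \<delta>"
        using t1 t2 n1 n2 n3 kd s(3) by linarith
      have "?rat z s \<le> (A + k * \<delta>) / (G - \<delta>)"
        by (rule frac_le) (use num hs d1 G A k d0 in auto)
      also have "\<dots> \<le> A / G + \<epsilon>"
      proof -
        have Gd: "0 < G - \<delta>" using d1 G by linarith
        have "(A + k * \<delta>) * G \<le> (A + \<epsilon> * G) * (G - \<delta>)"
          using d2 by (simp add: algebra_simps power2_eq_square)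
        then have "(A + k * \<delta>) / (G - \<delta>) \<le> (A + \<epsilon> * G) / G"
          using Gd G by (simp add: divide_le_eq le_divide_eq mult.commute)
        also have "\<dots> = A / G + \<epsilon>" using G by (simp add: field_simps)
        finally show ?thesis .
      qed
      finally show ?thesis using s(1) sne unfolding A_def G_def by blast
    qed
    have loc: "eventually (\<lambda>M. \<forall>z\<in>ball z0 (e/4). ?sig z (?V M) \<le> ?sig z ?D + ereal e) sequentially" for z0
    proof -
      have e4: "e/4 > 0" using e by simp
      obtain g where g: "g\<in>?D" "g \<noteq> (\<lambda>_. 0)" "?rat z0 g < r z0 + e/4" using rapp[OF e4] by blast
      obtain s where s: "s\<in>?S" "s \<noteq> (\<lambda>_. 0)" "?rat z0 s \<le> ?rat z0 g + e/4" using approxS[OF g(1,2) e4] by blast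
      obtain N where N: "s \<in> ?V N" using cspan_fin[where K=K and xs=xs, OF s(1)] by blast
      show ?thesis
      proof (rule eventually_sequentiallyI[of N], intro ballI)
        fix M z assume M: "N \<le> M" and z: "z \<in> ball z0 (e/4)"
        have sM: "s \<in> ?V M" using N Vmono[OF M] by blast
        have sD: "s \<in> ?D" using s(1) SD by blast
        have dz: "cmod (z - z0) < e/4" using z by (simp add: dist_norm norm_minus_commute)
        have "?rat z s \<le> ?rat z0 s + cmod (z - z0)" using lip sD s(2) by blast
        moreover have "r z0 \<le> r z + cmod (z0 - z)" by (rule rlip)
        ultimately have "?rat z s \<le> r z + e" using g(3) s(3) dz by (simp add: norm_minus_commute)
        moreover have "?sig z (?V M) \<le> ereal (?rat z s)" by (rule sig_lower) (use sM s(2) in auto)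
        ultimately have "?sig z (?V M) \<le> ereal (r z + e)" by (meson ereal_less_eq(3) order_trans)
        then show "?sig z (?V M) \<le> ?sig z ?D + ereal e" using fin by simp
      qed
    qed
    have cov: "C \<subseteq> (\<Union>c\<in>C. ball c (e/4))" using e by auto
    obtain C' where C': "C' \<subseteq> C" "finite C'" "C \<subseteq> (\<Union>c\<in>C'. ball c (e/4))"
      using compactE_image[OF C _ cov] by blast
    have "eventually (\<lambda>M. \<forall>c\<in>C'. \<forall>z\<in>ball c (e/4). ?sig z (?V M) \<le> ?sig z ?D + ereal e) sequentially"
      using loc by (intro eventually_ball_finite[OF C'(2)] ballI)
    then show ?thesis
    proof (rule eventually_mono)
      fix M assume h: "\<forall>c\<in>C'. \<forall>z\<in>ball c (e/4). ?sig z (?V M) \<le> ?sig z ?D + ereal e"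
      show "\<forall>z\<in>C. ?sig z (?V M) \<le> ?sig z ?D + ereal e"
      proof
        fix z assume "z \<in> C"
        then obtain c where "c \<in> C'" "z \<in> ball c (e/4)" using C'(3) by blast
        then show "?sig z (?V M) \<le> ?sig z ?D + ereal e" using h by blast
      qed
    qed
  qed
  show ?thesis
  proof (intro conjI part1 allI impI)
    fix C :: "complex set" and e :: real assume C: "compact C" and e: "e > 0"
    show "\<forall>\<^sub>F N in sequentially. \<forall>z\<in>C. ?sig z ?D - ereal e \<le> ?sig z (?V N) \<and> ?sig z (?V N) \<le> ?sig z ?D + ereal e"
      using upper[OF C e]
    proof (rule eventually_mono)
      fix N assume h: "\<forall>z\<in>C. ?sig z (?V N) \<le> ?sig z ?D + ereal e"
      show "\<forall>z\<in>C. ?sig z ?D - ereal e \<le> ?sig z (?V N) \<and> ?sig z (?V N) \<le> ?sig z ?D + ereal e"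
      proof (intro ballI conjI)
        fix z assume z: "z \<in> C"
        show "?sig z ?D - ereal e \<le> ?sig z (?V N)" by (rule lowerb[OF e])
        show "?sig z (?V N) \<le> ?sig z ?D + ereal e" using h z by blast
      qed
    qed
  qed
qed

end
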